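(* Let $n\ge1$, $p$ a prime, $R\subset E_n$, $S\subset E_n$ nonempty, $T=T_{R,S}$ as in the context, and $t\in S$. (1) If $t\notin T$, then $\mathsf{gen}^{(t)}_{R,S}\in\mathcal{C}_{\mathsf{pHa},S}$. (2) If $t\in T$, then $\mathsf{gen}^{(t)}_{R,S}\in\bigcap_{j\in S}\mathcal{C}_{R,S\setminus\{j\}}$.
   Context: $E_n=\{1,\dots,n\}$, indices mod $n$; $e_i$ standard basis ($e_0=e_n$). $\delta_U^{(i)}=-1$ if $i\in U$, else $1$. $F^{(d)}_U(x)=\sum_{i=0}^{n-1}p^i\delta_U^{(d+i)}x_{d+i}$. For nonempty $S'\subset E_n$, $T_{R,S'}$ is the unique subset such that for each $i$ with $i+1\notin S'$: if $i\notin R$ exactly one of $i,i+1$ lies in $T_{R,S'}$, if $i\in R$ both or neither lie in it; and for each $i\in S'$, $i-1\in T_{R,S'}\iff i-1\in R$. Then $\mathcal{C}_{R,S'}=\{x\in\mathbb{Z}^n:F^{(i)}_{T_{R,S'}}(x)\le0\ \forall i\in S'\}$, and $\mathcal{C}_{R,\emptyset}=\mathbb{Z}^n$. With $T=T_{R,S}$, $\mathsf{gen}^{(t)}_{R,S}=\delta_T^{(t)}e_t-p\delta_R^{(t-1)}e_{t-1}$. Saturation of a submonoid $A\subset\mathbb{Z}^n$: $\{x: mx\in A\text{ for some }m\ge1\}$. $\mathsf{ha}^{(i)}_{R,S}=-\delta_S^{(i)}e_i-p\delta_R^{(i-1)}e_{i-1}$ and $\mathcal{C}_{\mathsf{pHa},S}$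 is the saturation of $\sum_{i\in S}\mathbb{N}\mathsf{ha}^{(i)}_{R,S}+\sum_{i\notin S}\mathbb{Z}\mathsf{ha}^{(i)}_{R,S}$. *)

theory Defs
  imports "HOL-Computational_Algebra.Primes"
begin

text \<open>Vectors of Z^n are represented as functions nat => int supported on E_n = {1..n}.
  Indices are integers taken modulo n, normalised into {1..n} by red (so e_0 = e_n).\<close>

definition red :: "nat \<Rightarrow> int \<Rightarrow> nat" where
  "red n i = nat ((i - 1) mod int n + 1)"

definition zvec :: "nat \<Rightarrow> (nat \<Rightarrow> int) set" where
  "zvec n = {x. \<forall>k. k \<notin> {1..n} \<longrightarrow> x k = 0}"

definition ebasis :: "nat \<Rightarrow> int \<Rightarrow> (nat \<Rightarrow> int)" where
  "ebasis n i = (\<lambda>k. if k = red n i then 1 else 0)"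

definition delta :: "nat \<Rightarrow> nat set \<Rightarrow> int \<Rightarrow> int" where
  "delta n U i = (if red n i \<in> U then -1 else 1)"

definition Ffun :: "nat \<Rightarrow> nat \<Rightarrow> nat set \<Rightarrow> int \<Rightarrow> (nat \<Rightarrow> int) \<Rightarrow> int" where
  "Ffun n p U d x = (\<Sum>i<n. int p ^ i * delta n U (d + int i) * x (red n (d + int i)))"

definition Tset :: "nat \<Rightarrow> nat set \<Rightarrow> nat set \<Rightarrow> nat set" where
  "Tset n R S' = (THE T. T \<subseteq> {1..n} \<and>
     (\<forall>i\<in>{1..n}. red n (int i + 1) \<notin> S' \<longrightarrow>
        (if i \<notin> R then ((i \<in> T) \<noteq> (red n (int i + 1) \<in> T))
         else ((i \<in> T) = (red n (int i + 1) \<in> T)))) \<and>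
     (\<forall>i\<in>S'. (red n (int i - 1) \<in> T) = (red n (int i - 1) \<in> R)))"

definition Ccone :: "nat \<Rightarrow> nat \<Rightarrow> nat set \<Rightarrow> nat set \<Rightarrow> (nat \<Rightarrow> int) set" where
  "Ccone n p R S' = (if S' = {} then zvec n
     else {x \<in> zvec n. \<forall>i\<in>S'. Ffun n p (Tset n R S') (int i) x \<le> 0})"

definition gen :: "nat \<Rightarrow> nat \<Rightarrow> nat set \<Rightarrow> nat set \<Rightarrow> nat \<Rightarrow> (nat \<Rightarrow> int)" where
  "gen n p R S t = (\<lambda>k. delta n (Tset n R S) (int t) * ebasis n (int t) k
                       - int p * delta n R (int t - 1) * ebasis n (int t - 1) k)"

definition ha :: "nat \<Rightarrow> nat \<Rightarrow> nat set \<Rightarrow> nat set \<Rightarrow> nat \<Rightarrow> (nat \<Rightarrow> int)" where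
  "ha n p R S i = (\<lambda>k. - delta n S (int i) * ebasis n (int i) k
                       - int p * delta n R (int i - 1) * ebasis n (int i - 1) k)"

definition saturation :: "nat \<Rightarrow> (nat \<Rightarrow> int) set \<Rightarrow> (nat \<Rightarrow> int) set" where
  "saturation n A = {x \<in> zvec n. \<exists>m::nat. m \<ge> 1 \<and> (\<lambda>k. int m * x k) \<in> A}"

definition haMonoid :: "nat \<Rightarrow> nat \<Rightarrow> nat set \<Rightarrow> nat set \<Rightarrow> (nat \<Rightarrow> int) set" where
  "haMonoid n p R S = {(\<lambda>k. \<Sum>i\<in>{1..n}. c i * ha n p R S i k) | c :: nat \<Rightarrow> int.
        \<forall>i\<in>S. c i \<ge> 0}"

definition CpHa :: "nat \<Rightarrow> nat \<Rightarrow> nat set \<Rightarrow> nat set \<Rightarrow> (nat \<Rightarrow> int) set" where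
  "CpHa n p R S = saturation n (haMonoid n p R S)"

end

theory Submission imports Defs begin

lemma red_int: "n \<ge> 1 \<Longrightarrow> int (red n a) = (a - 1) mod int n + 1"
  unfolding red_def by simp

lemma red_range: "n \<ge> 1 \<Longrightarrow> red n a \<in> {1..n}"
proof -
  assume n: "n \<ge> 1"
  have "(a - 1) mod int n < int n" "0 \<le> (a - 1) mod int n" using n by simp_all
  then have "int 1 \<le> int (red n a)" "int (red n a) \<le> int n" using red_int[OF n, of a] by simp_all
  then show ?thesis by (simp only: of_nat_le_iff atLeastAtMost_iff)
qed

lemma red_eq_iff: "n \<ge> 1 \<Longrightarrow> (red n a = red n b) = (a mod int n = b mod int n)"
proof -
  assume n: "n \<ge> 1"
  have "(red n a = red n b) = (int (red n a) = int (red n b))" by simp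
  also have "\<dots> = ((a - 1) mod int n = (b - 1) mod int n)" using red_int[OF n] by simp
  also have "\<dots> = (int n dvd (a - 1) - (b - 1))" by (rule mod_eq_dvd_iff)
  also have "\<dots> = (a mod int n = b mod int n)" by (simp add: mod_eq_dvd_iff)
  finally show ?thesis .
qed

lemma red_id: "k \<in> {1..n} \<Longrightarrow> red n (int k) = k"
  unfolding red_def by auto

lemma red_red: "n \<ge> 1 \<Longrightarrow> red n (int (red n a) + b) = red n (a + b)"
proof -
  assume n: "n \<ge> 1"
  have "(int (red n a) + b) mod int n = ((a - 1) mod int n + (1 + b)) mod int n"
    using red_int[OF n] by (simp add: add.assoc)
  also have "\<dots> = (a - 1 + (1 + b)) mod int n" by (rule mod_add_left_eq)
  also have "\<dots> = (a + b) mod int n" by simp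
  finally show ?thesis using red_eq_iff[OF n] by blast
qed

definition TP :: "nat \<Rightarrow> nat set \<Rightarrow> nat set \<Rightarrow> nat set \<Rightarrow> bool" where
  "TP n R S' T = (T \<subseteq> {1..n} \<and>
     (\<forall>i\<in>{1..n}. red n (int i + 1) \<notin> S' \<longrightarrow>
        (if i \<notin> R then ((i \<in> T) \<noteq> (red n (int i + 1) \<in> T))
         else ((i \<in> T) = (red n (int i + 1) \<in> T)))) \<and>
     (\<forall>i\<in>S'. (red n (int i - 1) \<in> T) = (red n (int i - 1) \<in> R)))"

lemma Tset_TP: "Tset n R S' = The (TP n R S')"
  unfolding Tset_def TP_def by simp

fun gmem :: "nat \<Rightarrow> nat set \<Rightarrow> nat set \<Rightarrow> nat \<Rightarrow> nat \<Rightarrow> bool" where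
  "gmem n R S k 0 = (k \<in> R)"
| "gmem n R S k (Suc d) = (if red n (int k + 1) \<in> S then k \<in> R
     else if k \<notin> R then \<not> gmem n R S (red n (int k + 1)) d
     else gmem n R S (red n (int k + 1)) d)"

lemma red_step: "n \<ge> 1 \<Longrightarrow> red n (int (red n (int k + 1)) + int e + 1) = red n (int k + int (Suc e) + 1)"
  using red_red[of n "int k + 1" "int e + 1"] by (simp add: add.assoc add.commute add.left_commute)

lemma gmem_stab:
  assumes n: "n \<ge> 1"
  shows "red n (int k + int e + 1) \<in> S \<Longrightarrow> e \<le> d \<Longrightarrow> e \<le> d' \<Longrightarrow> gmem n R S k d = gmem n R S k d'"
proof (induction e arbitrary: k d d')
  case 0
  then show ?case by (cases d; cases d'; simp)
next
  case (Suc e)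
  obtain a where d: "d = Suc a" using Suc.prems(2) by (cases d) auto
  obtain b where d': "d' = Suc b" using Suc.prems(3) by (cases d') auto
  show ?case
  proof (cases "red n (int k + 1) \<in> S")
    case True then show ?thesis using d d' by simp
  next
    case False
    have p: "red n (int (red n (int k + 1)) + int e + 1) \<in> S"
      by (subst red_step[OF n]) (rule Suc.prems(1))
    have "e \<le> a" "e \<le> b" using Suc.prems d d' by auto
    then have "gmem n R S (red n (int k + 1)) a = gmem n R S (red n (int k + 1)) b"
      using Suc.IH[OF p] by blast
    then show ?thesis using d d' False by simp
  qed
qed

lemma exists_e:
  assumes n: "n \<ge> 1" and s: "s \<in> {1..n}"
  shows "\<exists>e. e \<le> n - 1 \<and> red n (int k + int e + 1) = s"
proof -
  define e where "e = nat ((int s - int k - 1) mod int n)"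
  have e1: "int e = (int s - int k - 1) mod int n" using n unfolding e_def by simp
  have "(int s - int k - 1) mod int n < int n" using n by simp
  then have "e \<le> n - 1" using e1 by linarith
  moreover have "red n (int k + int e + 1) = red n (int s)"
  proof -
    have "(int k + int e + 1) mod int n = ((int s - int k - 1) mod int n + (int k + 1)) mod int n"
      using e1 by (simp add: algebra_simps)
    also have "\<dots> = (int s - int k - 1 + (int k + 1)) mod int n" by (rule mod_add_left_eq)
    also have "\<dots> = int s mod int n" by simp
    finally show ?thesis using red_eq_iff[OF n] by blast
  qed
  ultimately show ?thesis using red_id[OF s] by auto
qed

lemma red_back: "n \<ge> 1 \<Longrightarrow> red n (int (red n (int k + 1)) - 1) = red n (int k)"
  using red_red[of n "int k + 1" "-1"] by simp

lemma TP_char: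
  assumes n: "n \<ge> 1" and T: "TP n R S T"
  shows "k \<in> {1..n} \<Longrightarrow> red n (int k + int e + 1) \<in> S \<Longrightarrow> e \<le> d \<Longrightarrow> (k \<in> T) = gmem n R S k d"
proof (induction e arbitrary: k d)
  case 0
  have "(red n (int (red n (int k + 1)) - 1) \<in> T) = (red n (int (red n (int k + 1)) - 1) \<in> R)"
    using T 0 unfolding TP_def by auto
  then have "(k \<in> T) = (k \<in> R)" using red_back[OF n, of k] red_id[OF 0(1)] by simp
  then show ?case using 0 by (cases d; simp)
next
  case (Suc e)
  then obtain a where d: "d = Suc a" by (cases d; auto)
  show ?case
  proof (cases "red n (int k + 1) \<in> S")
    case True
    have "(red n (int (red n (int k + 1)) - 1) \<in> T) = (red n (int (red n (int k + 1)) - 1) \<in> R)"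
      using T True unfolding TP_def by auto
    then have "(k \<in> T) = (k \<in> R)" using red_back[OF n, of k] red_id[OF Suc(2)] by simp
    then show ?thesis using d True by simp
  next
    case False
    have p: "red n (int (red n (int k + 1)) + int e + 1) \<in> S"
      by (subst red_step[OF n]) (rule Suc.prems(2))
    have "e \<le> a" using Suc.prems d by auto
    then have ih: "(red n (int k + 1) \<in> T) = gmem n R S (red n (int k + 1)) a"
      using Suc.IH[OF red_range[OF n] p] by blast
    have "if k \<notin> R then ((k \<in> T) \<noteq> (red n (int k + 1) \<in> T)) else ((k \<in> T) = (red n (int k + 1) \<in> T))"
      using T False Suc.prems(1) unfolding TP_def by blast
    then show ?thesis using ih d False by (auto split: if_splits)
  qed
qed

lemma TP_ex1:
  assumes n: "n \<ge> 1" and S: "S \<subseteq> {1..n}" "S \<noteq> {}"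
  shows "\<exists>!T. TP n R S T"
proof -
  obtain s where s: "s \<in> S" using S by auto
  have se: "\<exists>e. e \<le> n - 1 \<and> red n (int k + int e + 1) \<in> S" for k
  proof -
    have "s \<in> {1..n}" using s S by auto
    from exists_e[OF n this, of k] s show ?thesis by metis
  qed
  define T0 where "T0 = {k \<in> {1..n}. gmem n R S k n}"
  have uniq: "T = T0" if "TP n R S T" for T
  proof -
    have "T \<subseteq> {1..n}" using that unfolding TP_def by auto
    moreover have "(k \<in> T) = gmem n R S k n" if "k \<in> {1..n}" for k
    proof -
      obtain e where e: "e \<le> n - 1" "red n (int k + int e + 1) \<in> S" using se[of k] by blast
      have "e \<le> n" using e(1) by simp
      then show ?thesis using TP_char[OF n \<open>TP n R S T\<close> that e(2)] by blast
    qed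
    ultimately show ?thesis unfolding T0_def by auto
  qed
  have "TP n R S T0"
  proof -
    obtain m where m: "n = Suc m" using n by (cases n) auto
    have A: "\<forall>i\<in>{1..n}. red n (int i + 1) \<notin> S \<longrightarrow>
        (if i \<notin> R then ((i \<in> T0) \<noteq> (red n (int i + 1) \<in> T0))
         else ((i \<in> T0) = (red n (int i + 1) \<in> T0)))"
    proof (intro ballI impI)
      fix i assume i: "i \<in> {1..n}" and ns: "red n (int i + 1) \<notin> S"
      let ?j = "red n (int i + 1)"
      obtain e where e: "e \<le> n - 1" "red n (int ?j + int e + 1) \<in> S" using se by blast
      have em: "e \<le> m" "e \<le> n" using e(1) m by auto
      have st: "gmem n R S ?j m = gmem n R S ?j n"
        using em by (rule gmem_stab[OF n e(2)])
      have g: "gmem n R S i n = (if ?j \<in> S then i \<in> R else if i \<notin> R then \<not> gmem n R S ?j m else gmem n R S ?j m)"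
        using gmem.simps(2)[of n R S i m] by (simp only: m[symmetric])
      have "i \<in> T0 = gmem n R S i n" using i unfolding T0_def by simp
      moreover have "?j \<in> T0 = gmem n R S ?j n" using red_range[OF n] unfolding T0_def by simp
      ultimately show "if i \<notin> R then ((i \<in> T0) \<noteq> (?j \<in> T0)) else ((i \<in> T0) = (?j \<in> T0))"
        using st ns g by simp
    qed
    have B: "\<forall>i\<in>S. (red n (int i - 1) \<in> T0) = (red n (int i - 1) \<in> R)"
    proof
      fix i assume i: "i \<in> S"
      let ?k = "red n (int i - 1)"
      have "red n (int ?k + 1) = red n (int i)" using red_red[OF n, of "int i - 1" 1] by simp
      then have "red n (int ?k + 1) = i" using red_id i S by auto
      moreover have "gmem n R S ?k n = (if red n (int ?k + 1) \<in> S then ?k \<in> R else if ?k \<notin> R then \<not> gmem n R S (red n (int ?k + 1)) m else gmem n R S (red n (int ?k + 1)) m)"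
        using gmem.simps(2)[of n R S ?k m] by (simp only: m[symmetric])
      ultimately show "(?k \<in> T0) = (?k \<in> R)" using i red_range[OF n, of "int i - 1"] unfolding T0_def by simp
    qed
    have sub: "T0 \<subseteq> {1..n}" unfolding T0_def by auto
    show ?thesis unfolding TP_def using sub A B by blast
  qed
  then show ?thesis using uniq by blast
qed

lemma Tset_prop:
  assumes "n \<ge> 1" "S \<subseteq> {1..n}" "S \<noteq> {}"
  shows "TP n R S (Tset n R S)"
  unfolding Tset_TP using theI'[OF TP_ex1[OF assms]] .


lemma idx:
  assumes n: "n \<ge> 1" and i: "i < n"
  shows "(red n (d + int i) = red n c) = (i = nat ((c - d) mod int n))"
proof -
  have ii: "int i mod int n = int i" using i by simp
  have "(red n (d + int i) = red n c) = ((d + int i) mod int n = c mod int n)" by (rule red_eq_iff[OF n])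
  also have "\<dots> = (int n dvd (d + int i - c))" by (rule mod_eq_dvd_iff)
  also have "\<dots> = (int n dvd (int i - (c - d)))" by (simp add: algebra_simps)
  also have "\<dots> = (int i mod int n = (c - d) mod int n)" by (simp add: mod_eq_dvd_iff)
  also have "\<dots> = (int i = (c - d) mod int n)" using ii by simp
  also have "\<dots> = (i = nat ((c - d) mod int n))" using n by auto
  finally show ?thesis .
qed

lemma sum_pick:
  assumes n: "n \<ge> 1"
  shows "(\<Sum>i<n. f i * ebasis n c (red n (d + int i))) = f (nat ((c - d) mod int n))"
proof -
  have lt: "nat ((c - d) mod int n) < n" using n by (simp add: nat_less_iff)
  have "(\<Sum>i<n. f i * ebasis n c (red n (d + int i))) = (\<Sum>i<n. if i = nat ((c - d) mod int n) then f i else 0)"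
    by (rule sum.cong) (auto simp: ebasis_def idx[OF n])
  also have "\<dots> = f (nat ((c - d) mod int n))" using lt by (simp add: sum.delta')
  finally show ?thesis .
qed

lemma delta_red: "n \<ge> 1 \<Longrightarrow> red n a = red n b \<Longrightarrow> delta n U a = delta n U b"
  unfolding delta_def by simp

lemma Ffun_gen:
  assumes n: "n \<ge> 1"
  shows "Ffun n p U d (gen n p R S t) =
     int p ^ nat ((int t - d) mod int n) * delta n U (int t) * delta n (Tset n R S) (int t)
     - int p ^ nat ((int t - 1 - d) mod int n) * delta n U (int t - 1) * (int p * delta n R (int t - 1))"
proof -
  let ?g = "\<lambda>i. int p ^ i * delta n U (d + int i)"
  let ?A = "delta n (Tset n R S) (int t)"
  let ?B = "int p * delta n R (int t - 1)"
  have "Ffun n p U d (gen n p R S t) = (\<Sum>i<n. ?A * (?g i * ebasis n (int t) (red n (d + int i)))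
       - ?B * (?g i * ebasis n (int t - 1) (red n (d + int i))))"
    unfolding Ffun_def gen_def by (rule sum.cong) (simp_all add: algebra_simps)
  also have "\<dots> = ?A * (\<Sum>i<n. ?g i * ebasis n (int t) (red n (d + int i)))
       - ?B * (\<Sum>i<n. ?g i * ebasis n (int t - 1) (red n (d + int i)))"
    by (simp add: sum_subtractf sum_distrib_left)
  also have "\<dots> = ?A * ?g (nat ((int t - d) mod int n)) - ?B * ?g (nat ((int t - 1 - d) mod int n))"
    by (simp only: sum_pick[OF n])
  also have "delta n U (d + int (nat ((int t - d) mod int n))) = delta n U (int t)"
    by (rule delta_red[OF n], subst idx[OF n]) (use n in \<open>simp_all add: nat_less_iff\<close>)
  also have "delta n U (d + int (nat ((int t - 1 - d) mod int n))) = delta n U (int t - 1)"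
    by (rule delta_red[OF n], subst idx[OF n]) (use n in \<open>simp_all add: nat_less_iff\<close>)
  finally show ?thesis by (simp add: algebra_simps)
qed


lemma gen_zvec: "n \<ge> 1 \<Longrightarrow> gen n p R S t \<in> zvec n"
  unfolding zvec_def gen_def ebasis_def using red_range by fastforce

lemma delta_vals: "delta n U a = -1 \<or> delta n U a = 1"
  unfolding delta_def by simp

lemma ineq_core:
  fixes P a b :: int
  assumes "P \<ge> 0" "a + b \<ge> 0"
  shows "- (P ^ Suc i * a) - P ^ i * P * b \<le> 0"
proof -
  have "- (P ^ Suc i * a) - P ^ i * P * b = - (P ^ Suc i * (a + b))" by (simp add: algebra_simps)
  also have "\<dots> \<le> 0" using assms by simp
  finally show ?thesis .
qed

lemma mod_pred:
  fixes x :: int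
  assumes n: "n \<ge> 1" and x: "x mod int n \<noteq> 0"
  shows "(x - 1) mod int n = x mod int n - 1"
proof -
  have "(x - 1) mod int n = (x mod int n - 1) mod int n" by (simp add: mod_diff_left_eq)
  moreover have "0 \<le> x mod int n" "x mod int n < int n" using n by simp_all
  then have "0 \<le> x mod int n - 1" "x mod int n - 1 < int n" using x by linarith+
  ultimately show ?thesis by simp
qed

lemma aux_eq: "(x::int) * a * (-1) - y * b * (P * r) = - (x * a) - y * P * (b * r)"
  by (simp add: algebra_simps)

theorem mainTheorem16:
  fixes n p t :: nat and R S :: "nat set"
  assumes "n \<ge> 1" and "prime p"
    and "R \<subseteq> {1..n}" and "S \<subseteq> {1..n}" and "S \<noteq> {}" and "t \<in> S"
  shows "(t \<notin> Tset n R S \<longrightarrow> gen n p R S t \<in> CpHa n p R S) \<and>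
         (t \<in> Tset n R S \<longrightarrow> gen n p R S t \<in> (\<Inter>j\<in>S. Ccone n p R (S - {j})))"
proof (intro conjI impI)
  note n = assms(1)
  have tn: "t \<in> {1..n}" using assms by auto
  have rt: "red n (int t) = t" using red_id[OF tn] .
  have gz: "gen n p R S t \<in> zvec n" using gen_zvec[OF n] .
  {
    assume tT: "t \<notin> Tset n R S"
    have d1: "delta n S (int t) = -1" unfolding delta_def rt using assms(6) by (simp only: if_True)
    have d2: "delta n (Tset n R S) (int t) = 1" unfolding delta_def rt using tT by (simp only: if_False)
    have eq: "ha n p R S t = gen n p R S t"
      unfolding ha_def gen_def d1 d2 by (rule ext) simp
    have "(\<lambda>k. \<Sum>i\<in>{1..n}. (if i \<in> {t} then 1 else 0) * ha n p R S i k) = ha n p R S t"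
    proof
      fix k
      have "(\<Sum>i\<in>{1..n}. (if i \<in> {t} then 1 else 0) * ha n p R S i k) = (\<Sum>i\<in>{1..n}. if i = t then ha n p R S i k else 0)"
        by (rule sum.cong) auto
      also have "\<dots> = ha n p R S t k" using tn by (simp add: sum.delta')
      finally show "(\<Sum>i\<in>{1..n}. (if i \<in> {t} then 1 else 0) * ha n p R S i k) = ha n p R S t k" .
    qed
    then have H: "gen n p R S t = (\<lambda>k. \<Sum>i\<in>{1..n}. (\<lambda>i. if i \<in> {t} then 1 else 0) i * ha n p R S i k)"
      using eq by simp
    have c0: "\<forall>i\<in>S. (0::int) \<le> (\<lambda>i. if i \<in> {t} then 1 else 0) i" by simp
    have hm: "gen n p R S t \<in> haMonoid n p R S"
      unfolding haMonoid_def mem_Collect_eq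
      by (rule exI[of _ "\<lambda>i. if i \<in> {t} then 1 else 0"], rule conjI[OF H c0])
    have m1: "(\<lambda>k. int 1 * gen n p R S t k) = gen n p R S t" by (rule ext) simp
    show "gen n p R S t \<in> CpHa n p R S"
      unfolding CpHa_def saturation_def mem_Collect_eq
      by (intro conjI gz exI[of _ 1]) (simp_all only: m1 hm order_refl)
  }
  {
    assume tT: "t \<in> Tset n R S"
    have dT: "delta n (Tset n R S) (int t) = -1" unfolding delta_def rt using tT by simp
    have P2: "int p \<ge> 2" using assms(2) prime_ge_2_nat by fastforce
    show "gen n p R S t \<in> (\<Inter>j\<in>S. Ccone n p R (S - {j}))"
    proof
      fix j assume j: "j \<in> S"
      show "gen n p R S t \<in> Ccone n p R (S - {j})"
      proof (cases "S - {j} = {}")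
        case True then show ?thesis unfolding Ccone_def using gz by simp
      next
        case False
        let ?S = "S - {j}"
        let ?T = "Tset n R ?S"
        have TP: "TP n R ?S ?T" using Tset_prop[OF n _ False] assms(4) by blast
        let ?k = "red n (int t - 1)"
        have kn: "?k \<in> {1..n}" using red_range[OF n] .
        have kt: "red n (int ?k + 1) = t" using red_red[OF n, of "int t - 1" 1] rt by simp
        let ?a = "delta n ?T (int t)"
        let ?b = "delta n ?T (int t - 1) * delta n R (int t - 1)"
        have ab: "?a + ?b \<ge> 0"
        proof (cases "t \<in> ?S")
          case True
          then have "(?k \<in> ?T) = (?k \<in> R)" using TP unfolding TP_def by blast
          then have "?b = 1" unfolding delta_def by simp
          then show ?thesis using delta_vals[of n ?T "int t"] by auto
        next
          case False
          have link: "\<forall>i\<in>{1..n}. red n (int i + 1) \<notin> ?S \<longrightarrow>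
              (if i \<notin> R then ((i \<in> ?T) \<noteq> (red n (int i + 1) \<in> ?T))
               else ((i \<in> ?T) = (red n (int i + 1) \<in> ?T)))"
            using TP unfolding TP_def by blast
          have "red n (int ?k + 1) \<notin> ?S" using kt False by simp
          from link[rule_format, OF kn this]
          have "if ?k \<notin> R then ((?k \<in> ?T) \<noteq> (t \<in> ?T)) else ((?k \<in> ?T) = (t \<in> ?T))"
            unfolding kt .
          then show ?thesis unfolding delta_def rt by (auto split: if_splits)
        qed
        have "Ffun n p ?T (int d) (gen n p R S t) \<le> 0" if d: "d \<in> ?S" for d
        proof -
          have dn: "d \<in> {1..n}" using d assms(4) by auto
          have F: "Ffun n p ?T (int d) (gen n p R S t) =
             - (int p ^ nat ((int t - int d) mod int n) * ?a)
             - int p ^ nat ((int t - 1 - int d) mod int n) * int p * ?b"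
            unfolding Ffun_gen[OF n] dT by (rule aux_eq)
          show ?thesis
          proof (cases "d = t")
            case True
            have "(?k \<in> ?T) = (?k \<in> R)" using TP d True unfolding TP_def by blast
            then have b1: "?b = 1" unfolding delta_def by simp
            have "(int t - 1 - int d) mod int n = int n - 1" using True n
              by (simp add: zmod_minus1)
            then have e: "nat ((int t - 1 - int d) mod int n) = n - 1" by simp
            have "int p ^ (n - 1) * int p = int p ^ n" using n
              by (metis Suc_diff_1 less_le_trans zero_less_one power_Suc2)
            moreover have h: "int p ^ 1 \<le> int p ^ n" using n P2 by (intro power_increasing) auto
            moreover have "2 \<le> int p ^ n" using order_trans[OF P2 h[unfolded power_one_right]] .
            ultimately have "int p ^ (n - 1) * int p \<ge> 2" by linarith
            then show ?thesis unfolding F b1 e using True delta_vals[of n ?T "int t"] by auto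
          next
            case False
            have "int t mod int n \<noteq> int d mod int n"
              using red_eq_iff[OF n, of "int t" "int d"] rt red_id[OF dn] False by simp
            then have nz: "(int t - int d) mod int n \<noteq> 0" by (simp add: mod_eq_dvd_iff dvd_eq_mod_eq_0)
            have "(int t - 1 - int d) mod int n = (int t - int d) mod int n - 1"
              using mod_pred[OF n nz] by (simp add: algebra_simps)
            then have e: "nat ((int t - int d) mod int n) = Suc (nat ((int t - 1 - int d) mod int n))"
            proof -
              have "0 \<le> (int t - int d) mod int n" using n by simp
              then have "0 < (int t - int d) mod int n" using nz by linarith
              then show ?thesis unfolding \<open>(int t - 1 - int d) mod int n = (int t - int d) mod int n - 1\<close> by linarith
            qed
            show ?thesis unfolding F e by (rule ineq_core[OF _ ab]) simp
          qed
        qed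
        moreover have "Ccone n p R ?S = {x \<in> zvec n. \<forall>i\<in>?S. Ffun n p ?T (int i) x \<le> 0}"
          using False unfolding Ccone_def by (simp only: if_False)
        ultimately show ?thesis using gz by blast
      qed
    qed
  }
qed

end
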